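(* Let $L=\mathbb{Z}[d^{\pm 1}, n^{\pm 1}, s^{\pm 1}]$ be the Laurent polynomial ring in three variables, and let $X$ be any $L$-module. Define binary operations on $X$ by \[x\ast y=(-dsn^2)x+ny\quad\text{and}\quad x\cdot y=dx+sy .\] Then $(X,\ast,\cdot)$ is a biquasile. Such a biquasile is called an Alexander (or linear) biquasile.
   Context: A biquasile is a set $X$ with binary operations $\ast,\cdot,\backslash^{\ast},/^{\ast},\backslash,/ : X\times X\to X$ satisfying the following two groups of conditions. First, $\ast$ and $\cdot$ are quasigroup operations with the given left and right inverse operations: for all $x,y\in X$, \[y\backslash^{\ast}(y\ast x)=x=(x\ast y)/^{\ast}y,\qquad y\backslash(y\cdot x)=x=(x\cdot y)/y.\] Second, for all $a,b,x,y\in X$, \[a\ast(x\cdot [y\ast(a\cdot b)]) = (a\ast[x\cdot y])\ast(x\cdot [y\ast([a\ast(x\cdot y)]\cdot b)])\] and \[y\ast([a\ast (x\cdot y)]\cdot b) = (y\ast[a\cdot b])\ast([a\ast (x\cdot [y\ast(a\cdot b)])]\cdot b).\] The claim asserts that inverse operations $\backslash^{\ast},/^{\ast},\backslash,/$ exist making $X$ satisfy all of these conditions with the given $\ast$ and $\cdot$. *)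

theory Defs
  imports Main
begin

definition biquasile :: "('a \<Rightarrow> 'a \<Rightarrow> 'a) \<Rightarrow> ('a \<Rightarrow> 'a \<Rightarrow> 'a) \<Rightarrow> bool" where
  "biquasile star dot \<longleftrightarrow>
    (\<exists>lstar rstar ldot rdot :: 'a \<Rightarrow> 'a \<Rightarrow> 'a.
       (\<forall>x y. lstar y (star y x) = x \<and> rstar (star x y) y = x \<and>
              ldot y (dot y x) = x \<and> rdot (dot x y) y = x) \<and>
       (\<forall>a b x y.
          star a (dot x (star y (dot a b))) =
            star (star a (dot x y)) (dot x (star y (dot (star a (dot x y)) b))) \<and>
          star y (dot (star a (dot x y)) b) =
            star (star y (dot a b)) (dot (star a (dot x (star y (dot a b)))) b)))"

text \<open>An L-module, L = Z[d^{+-1}, n^{+-1}, s^{+-1}], is the same as an abelian group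
together with three pairwise commuting additive automorphisms (the actions of d, n, s).\<close>
definition additive_aut :: "('a::ab_group_add \<Rightarrow> 'a) \<Rightarrow> bool" where
  "additive_aut f \<longleftrightarrow> bij f \<and> (\<forall>x y. f (x + y) = f x + f y)"

definition Laurent3_module :: "('a::ab_group_add \<Rightarrow> 'a) \<Rightarrow> ('a \<Rightarrow> 'a) \<Rightarrow> ('a \<Rightarrow> 'a) \<Rightarrow> bool" where
  "Laurent3_module D N S \<longleftrightarrow> additive_aut D \<and> additive_aut N \<and> additive_aut S \<and>
     D \<circ> N = N \<circ> D \<and> D \<circ> S = S \<circ> D \<and> N \<circ> S = S \<circ> N"

end

theory Submission
  imports Defs
begin

lemma add_aut_facts:
  assumes "additive_aut f"
  shows "f (x + y) = f x + f y" "f (- x) = - f x" "f (x - y) = f x - f y"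
    "f (inv f x) = x" "inv f (f x) = x"
proof -
  have b: "bij f" and a: "\<And>x y. f (x + y) = f x + f y" using assms unfolding additive_aut_def by auto
  show "f (x + y) = f x + f y" by (rule a)
  have "f 0 = 0" using a[of 0 0] by simp
  then have n: "\<And>x. f (- x) = - f x" using a by (metis add.right_inverse add_eq_0_iff)
  show "f (- x) = - f x" by (rule n)
  show "f (x - y) = f x - f y" using a n by (metis diff_conv_add_uminus)
  show "f (inv f x) = x" using b by (simp add: bij_is_surj surj_f_inv_f)
  show "inv f (f x) = x" using b by (simp add: bij_is_inj)
qed

theorem proposition4:
  fixes D N S :: "'x::ab_group_add \<Rightarrow> 'x"
  assumes "Laurent3_module D N S"
  shows "biquasile (\<lambda>x y. - D (S (N (N x))) + N y) (\<lambda>x y. D x + S y)"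
proof -
  have aD: "additive_aut D" and aN: "additive_aut N" and aS: "additive_aut S"
    and c1: "D \<circ> N = N \<circ> D" and c2: "D \<circ> S = S \<circ> D" and c3: "N \<circ> S = S \<circ> N"
    using assms unfolding Laurent3_module_def by auto
  have ND: "N (D x) = D (N x)" for x using c1 by (metis comp_apply)
  have SD: "S (D x) = D (S x)" for x using c2 by (metis comp_apply)
  have SN: "S (N x) = N (S x)" for x using c3 by (metis comp_apply)
  note F = add_aut_facts[OF aD] add_aut_facts[OF aN] add_aut_facts[OF aS]
  show ?thesis
    unfolding biquasile_def
    apply (rule exI[of _ "\<lambda>y z. inv N (z + D (S (N (N y))))"])
    apply (rule exI[of _ "\<lambda>z y. inv S (inv N (inv N (inv D (N y - z))))"])
    apply (rule exI[of _ "\<lambda>y z. inv S (z - D y)"])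
    apply (rule exI[of _ "\<lambda>z y. inv D (z - S y)"])
    apply (intro conjI allI)
         apply (simp_all add: F ND SD SN algebra_simps)
    done
qed

end
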